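(* For every integer $n\ge 1$, $$C_n=\frac{1}{\pi}\int_0^{\infty}\frac{t^2}{\left(t^2+\frac14\right)^2}\left[\left(2-\frac{1}{\sqrt{t^2+\frac14}}\right)^{n-1}+\left(2+\frac{1}{\sqrt{t^2+\frac14}}\right)^{n-1}\right]\mathrm{d}t .$$
   Context: $C_n=\frac{1}{n+1}\binom{2n}{n}$ denotes the $n$-th Catalan number ($n\ge 0$). *)

theory Defs
  imports "HOL-Analysis.Analysis"
begin

definition catalan :: "nat \<Rightarrow> real" where
  "catalan n = real ((2*n) choose n) / real (n+1)"

end

theory Submission
  imports Defs
begin
definition vv :: "real \<Rightarrow> real" where "vv x = sqrt (4*x - x^2)"

fun GG :: "nat \<Rightarrow> real \<Rightarrow> real" where
  "GG 0 x = (x-2) * vv x / 2 + 2 * arcsin ((x-2)/2)"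
| "GG (Suc k) x = ((4*real k+6) * GG k x - x^k * vv x ^ 3) / (real k + 3)"

lemma cb: "(Suc j) * (Suc j) * ((2*Suc j) choose Suc j) = (2*Suc j) * (2*j+1) * ((2*j) choose j)"
proof -
  have 1: "Suc j * (Suc (Suc (2*j)) choose Suc j) = Suc (Suc (2*j)) * (Suc (2*j) choose j)"
    by (rule Suc_times_binomial)
  have 2: "(Suc (2*j) - j) * (Suc (2*j) choose j) = Suc (2*j) * ((Suc (2*j) - 1) choose j)"
    by (rule binomial_absorb_comp)
  have 3: "Suc (2*j) - j = Suc j" "Suc (2*j) - 1 = 2*j" "2 * Suc j = Suc (Suc (2*j))" by simp_all
  have 4: "2*j+1 = Suc (2*j)" by simp
  have "(Suc j) * (Suc j) * ((2*Suc j) choose Suc j) = Suc j * (Suc (Suc (2*j)) * (Suc (2*j) choose j))"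
    unfolding 3 1[symmetric] by (simp only: mult.assoc)
  also have "\<dots> = Suc (Suc (2*j)) * (Suc (2*j) * ((2*j) choose j))"
    using 2 unfolding 3 by (simp only: mult.left_commute[of "Suc j"])
  finally show ?thesis unfolding 3 4 by (simp only: mult.assoc)
qed
lemma cat_lemma: assumes "(x::real) \<ge> 0" "(x+1)*(x+1)*X = (2*(x+1))*(2*x+1)*Y"
  shows "X/(x+2) = (4*x+2)/(x+2)*(Y/(x+1))"
proof -
  have "(x+1)*((x+1)*X) = (x+1)*(2*(2*x+1)*Y)" using assms(2) by (simp only: mult_ac)
  then have h: "(x+1)*X = 2*(2*x+1)*Y" using assms(1) by simp
  have p: "x+1 > 0" "x+2 > 0" using assms(1) by simp_all
  have Xe: "X = 2*(2*x+1)*Y/(x+1)" using h p by (simp add: field_simps)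
  have "(2*(2*x+1)*Y/(x+1))/(x+2) = (4*x+2)/(x+2)*(Y/(x+1))"
    using p by (simp add: field_simps)
  then show ?thesis unfolding Xe .
qed

lemma catalan_Suc: "catalan (Suc j) = (4*real j+2)/(real j+2) * catalan j"
proof -
  have r: "(real j+1)*(real j+1)*real ((2*Suc j) choose Suc j) = (2*(real j+1))*(2*real j+1)*real ((2*j) choose j)"
    using arg_cong[OF cb[of j], of real] by (simp only: of_nat_mult of_nat_Suc of_nat_add of_nat_numeral of_nat_1 add.commute)
  have e1: "real (Suc j + 1) = real j + 2" and e2: "real (j+1) = real j + 1" by simp_all
  show ?thesis unfolding catalan_def e1 e2 by (rule cat_lemma[OF _ r]) simp
qed

lemma vv_deriv: assumes "0 < x" "x < 4" shows "(vv has_real_derivative (2-x)/vv x) (at x)"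
proof -
  have p: "4*x - x^2 > 0" using assms by (simp add: power2_eq_square mult_less_cancel_right_disj)
  have d1: "((\<lambda>x. 4*x - x^2) has_real_derivative 4 - 2*x) (at x)"
    using DERIV_diff[OF DERIV_cmult[OF DERIV_ident, of 4] DERIV_pow[of 2 x]] by simp
  note d2 = DERIV_chain2[OF DERIV_real_sqrt[OF p] d1]
  have sp: "sqrt (4*x - x^2) > 0" using p by simp
  have e: "inverse (sqrt (4*x - x^2)) / 2 * (4 - 2*x) = (2-x) / sqrt (4*x - x^2)"
    using sp by (simp add: field_simps)
  show ?thesis unfolding vv_def
    by (rule DERIV_cong[OF d2 e])
qed

lemma vv_pos: "0 < x \<Longrightarrow> x < 4 \<Longrightarrow> vv x > 0"
  unfolding vv_def by (simp add: power2_eq_square)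

lemma vv_sq: assumes "0 \<le> x" "x \<le> 4" shows "vv x ^ 2 = 4*x - x^2"
proof -
  have "0 \<le> x * (4 - x)" using assms by simp
  then have "0 \<le> 4*x - x^2" by (simp add: power2_eq_square algebra_simps)
  then show ?thesis unfolding vv_def by simp
qed

lemma vv_cont: "continuous_on A vv"
  unfolding vv_def by (intro continuous_intros)

lemma GG_deriv: "0 < x \<Longrightarrow> x < 4 \<Longrightarrow> (GG m has_real_derivative x^m * vv x) (at x)"
proof (induction m)
  case 0
  have v: "vv x > 0" "vv x ^ 2 = 4*x - x^2" using 0 vv_pos vv_sq by auto
  have s: "sqrt (1 - ((x-2)/2)^2) = vv x / 2"
  proof -
    have "1 - ((x-2)/2)^2 = (vv x / 2)^2" using v by (simp add: power2_eq_square field_simps)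
    then show ?thesis using v by simp
  qed
  have a: "-1 < (x-2)/2" "(x-2)/2 < 1" using 0 by auto
  have "((\<lambda>x. (x-2) * vv x / 2 + 2 * arcsin ((x-2)/2)) has_real_derivative
      (1 * vv x + (x-2) * ((2-x)/vv x)) / 2 + 2 * (inverse (sqrt (1 - ((x-2)/2)^2)) * (1/2))) (at x)"
  proof -
    have arc: "((\<lambda>x. arcsin ((x-2)/2)) has_real_derivative inverse (sqrt (1 - ((x-2)/2)^2)) * (1/2)) (at x)"
      by (rule DERIV_chain2[where g="\<lambda>x. (x-2)/2" and f=arcsin, OF DERIV_arcsin[OF a]])
         (auto intro!: derivative_eq_intros)
    have vd: "(vv has_real_derivative (2-x)/vv x) (at x)" using 0 by (rule vv_deriv)
    have l: "((\<lambda>x. x - 2) has_real_derivative 1) (at x)"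
      using DERIV_diff[OF DERIV_ident DERIV_const[of 2]] by simp
    have "((\<lambda>x. (x-2) * vv x) has_real_derivative (1 * vv x + (x-2) * ((2-x)/vv x))) (at x)"
      using DERIV_mult[OF l vd] by (simp add: algebra_simps)
    from DERIV_add[OF DERIV_cdivide[OF this, of 2] DERIV_cmult[OF arc, of 2]]
    show ?thesis by simp
  qed
  moreover have "(1 * vv x + (x-2) * ((2-x)/vv x)) / 2 + 2 * (inverse (sqrt (1 - ((x-2)/2)^2)) * (1/2)) = vv x"
    unfolding s using v by (simp add: field_simps power2_eq_square)
  ultimately show ?case by simp
next
  case (Suc k)
  have v: "vv x > 0" "vv x ^ 2 = 4*x - x^2" using Suc vv_pos vv_sq by auto
  have d: "((\<lambda>x. ((4*real k+6) * GG k x - x^k * vv x ^ 3) / (real k + 3)) has_real_derivative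
     ((4*real k+6) * (x^k * vv x) - (real k * x^(k-1) * vv x ^ 3 + (3 * vv x ^ 2 * ((2-x)/vv x)) * x^k)) / (real k + 3)) (at x)"
  proof -
    have vd: "(vv has_real_derivative (2-x)/vv x) (at x)" using Suc.prems by (rule vv_deriv)
    have v3: "((\<lambda>x. vv x ^ 3) has_real_derivative (3 * vv x ^ 2 * ((2-x)/vv x))) (at x)"
      using DERIV_power[OF vd, of 3] by (simp add: algebra_simps)
    have p: "((\<lambda>x. x ^ k) has_real_derivative real k * x^(k-1)) (at x)"
      using DERIV_pow[of k x] by simp
    have g: "(GG k has_real_derivative x^k * vv x) (at x)" using Suc by blast
    have "((\<lambda>x. x ^ k * vv x ^ 3) has_real_derivative (real k * x^(k-1) * vv x ^ 3 + (3 * vv x ^ 2 * ((2-x)/vv x)) * x^k)) (at x)"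
      by (rule DERIV_mult[OF p v3])
    from DERIV_cdivide[OF DERIV_diff[OF DERIV_cmult[OF g, of "4*real k+6"] this], of "real k + 3"]
    show ?thesis by simp
  qed
  have eq1: "real k * x^(k-1) * vv x ^ 3 = real k * x^k * (4 - x) * vv x"
  proof (cases k)
    case (Suc j)
    have c: "vv x ^ 3 = (4*x - x^2) * vv x" using v(2)[symmetric] by (simp add: power3_eq_cube power2_eq_square)
    show ?thesis unfolding c using Suc by (simp add: algebra_simps power2_eq_square)
  qed simp
  have eq2: "((4*real k+6) * (x^k * vv x) - (real k * x^k * (4 - x) * vv x + (3 * vv x ^ 2 * ((2-x)/vv x)) * x^k)) / (real k + 3)
     = x^Suc k * vv x"
  proof -
    have e: "(3 * vv x ^ 2 * ((2-x)/vv x)) = 3*(2-x) * vv x" using v(1) by (simp add: power2_eq_square)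
    have "(4*real k+6) * (x^k * vv x) - (real k * x^k * (4 - x) * vv x + 3*(2-x) * vv x * x^k)
        = (real k + 3) * (x^Suc k * vv x)" by (simp add: algebra_simps)
    then show ?thesis unfolding e by simp
  qed
  have ge: "GG (Suc k) = (\<lambda>x. ((4*real k+6) * GG k x - x^k * vv x ^ 3) / (real k + 3))"
    by (rule ext) simp
  show ?case unfolding ge
    by (rule DERIV_cong[OF d]) (subst eq1, rule eq2)
qed

lemma GG_cont: "continuous_on {0..4} (GG m)"
proof (induction m)
  case 0
  show ?case unfolding GG.simps vv_def
    by (intro continuous_intros) auto
next
  case (Suc k)
  have ge: "GG (Suc k) = (\<lambda>x. ((4*real k+6) * GG k x - x^k * vv x ^ 3) / (real k + 3))"
    by (rule ext) simp
  show ?case unfolding ge using Suc by (intro continuous_intros vv_cont) auto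
qed

lemma vv04: "vv 0 = 0" "vv 4 = 0" unfolding vv_def by simp_all

lemma GG_diff: "GG m 4 - GG m 0 = 2*pi*catalan (Suc m)"
proof (induction m)
  case 0
  show ?case by (simp add: vv04 catalan_def)
next
  case (Suc k)
  have "GG (Suc k) 4 - GG (Suc k) 0 = (4*real k+6)/(real k+3) * (GG k 4 - GG k 0)"
    by (simp add: vv04 diff_divide_distrib right_diff_distrib)
  also have "\<dots> = 2*pi*catalan (Suc (Suc k))"
    unfolding Suc catalan_Suc[of "Suc k"] by (simp add: field_simps)
  finally show ?case .
qed

lemma sq_ge: "sqrt (t^2 + 1/4) \<ge> 1/2" for t :: real
proof -
  have "sqrt (1/4) \<le> sqrt (t^2 + 1/4)" by (rule real_sqrt_le_mono) simp
  moreover have "sqrt (1/4::real) = 1/2" by (simp add: real_sqrt_divide)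
  ultimately show ?thesis by simp
qed

lemma sq_gt: "t > 0 \<Longrightarrow> sqrt (t^2 + 1/4) > 1/2" for t :: real
proof -
  assume "t > 0"
  then have "sqrt (1/4) < sqrt (t^2 + 1/4)" by (subst real_sqrt_less_iff) simp
  moreover have "sqrt (1/4::real) = 1/2" by (simp add: real_sqrt_divide)
  ultimately show ?thesis by simp
qed

lemma aux1: "(s::real) \<ge> 1/2 \<Longrightarrow> 0 < 1/s \<and> 1/s \<le> 2" by (auto simp: field_simps)
lemma aux2: "(s::real) > 1/2 \<Longrightarrow> 1/s < 2" by (auto simp: field_simps)

lemma u_bounds: "0 < 1 / sqrt (t^2 + 1/4)" "1 / sqrt (t^2 + 1/4) \<le> (2::real)"
  using aux1[OF sq_ge[of t]] by auto

lemma u_lt: "t > 0 \<Longrightarrow> 1 / sqrt (t^2 + 1/4) < (2::real)"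
  using aux2[OF sq_gt[of t]] by auto

lemma vv_u: assumes "t \<ge> 0" shows "vv (2 - 1 / sqrt (t^2 + 1/4)) = 2*t / sqrt (t^2 + 1/4)"
   "vv (2 + 1 / sqrt (t^2 + 1/4)) = 2*t / sqrt (t^2 + 1/4)"
proof -
  define s where "s = sqrt (t^2 + 1/4)"
  have sp: "s > 0" unfolding s_def using sq_ge[of t] by linarith
  have s2: "s^2 = t^2 + 1/4" unfolding s_def by (simp add: add_nonneg_nonneg)
  have "4 * (2 - 1/s) - (2 - 1/s)^2 = (2*t/s)^2" "4 * (2 + 1/s) - (2 + 1/s)^2 = (2*t/s)^2"
  proof -
    have t2: "t^2 = s^2 - 1/4" using s2 by simp
    have e: "(2*t/s)^2 = 4*(s^2-1/4)/s^2" by (simp add: power_divide power_mult_distrib t2)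
    show "4 * (2 - 1/s) - (2 - 1/s)^2 = (2*t/s)^2" "4 * (2 + 1/s) - (2 + 1/s)^2 = (2*t/s)^2"
      unfolding e using sp by (simp_all add: field_simps power2_eq_square)
  qed
  then show "vv (2 - 1 / sqrt (t^2 + 1/4)) = 2*t / sqrt (t^2 + 1/4)"
   "vv (2 + 1 / sqrt (t^2 + 1/4)) = 2*t / sqrt (t^2 + 1/4)"
    unfolding vv_def s_def[symmetric] using sp assms by simp_all
qed

lemma u_deriv: "((\<lambda>t. 1 / sqrt (t^2 + 1/4)) has_real_derivative - (t / sqrt (t^2 + 1/4) ^ 3)) (at t)"
  for t :: real
proof -
  have p: "t^2 + 1/4 > 0" by (simp add: add_nonneg_pos)
  have sp: "sqrt (t^2 + 1/4) > 0" using p by simp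
  have d1: "((\<lambda>t. t^2 + 1/4) has_real_derivative 2*t) (at t)"
    using DERIV_add[OF DERIV_pow[of 2 t] DERIV_const[of "1/4"]] by simp
  have d2: "((\<lambda>t. sqrt (t^2+1/4)) has_real_derivative inverse (sqrt (t^2+1/4)) / 2 * (2*t)) (at t)"
    by (rule DERIV_chain2[OF DERIV_real_sqrt[OF p] d1])
  note d3 = DERIV_divide[OF DERIV_const[of 1] d2]
  define S where "S = sqrt (t^2+1/4)"
  have e: "(0 * S - 1 * (inverse S / 2 * (2*t))) / (S * S) = - (t / S ^ 3)"
    using sp unfolding S_def[symmetric] by (simp add: field_simps power3_eq_cube)
  show ?thesis
    by (rule DERIV_cong[OF d3[OF sp[THEN less_imp_neq, symmetric]]]) (use e in \<open>simp add: S_def\<close>)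
qed

lemma u_tendsto: "((\<lambda>t::real. 1 / sqrt (t^2 + 1/4)) \<longlongrightarrow> 0) at_top"
proof -
  have "filterlim (\<lambda>t::real. sqrt (t^2 + 1/4)) at_top at_top"
  proof (rule filterlim_at_top_mono[OF filterlim_ident])
    show "\<forall>\<^sub>F x in at_top. x \<le> sqrt (x^2 + 1/4)"
    proof (rule always_eventually, rule allI)
      fix x :: real
      have "x \<le> \<bar>x\<bar>" by simp
      also have "\<bar>x\<bar> = sqrt (x^2)" by simp
      also have "\<dots> \<le> sqrt (x^2 + 1/4)" by (rule real_sqrt_le_mono) simp
      finally show "x \<le> sqrt (x^2 + 1/4)" .
    qed
  qed
  then show ?thesis
    by (intro tendsto_divide_0[OF tendsto_const] filterlim_at_top_imp_at_infinity)
qed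

lemma alg: "(S::real) > 0 \<Longrightarrow> D = S*S*S*S \<Longrightarrow>
  (P*(2*t/S)*(-(-(t/S^3))) - Q*(2*t/S)*(-(t/S^3)))/2 = t^2/D*(P+Q)"
proof -
  assume s: "S > 0" and d: "D = S*S*S*S"
  have "S^3 = S*S*S" by (simp add: power3_eq_cube)
  then have "(P*(2*t/S)*(-(-(t/S^3))) - Q*(2*t/S)*(-(t/S^3)))/2 = (P+Q) * (t*t) / (S*S*S*S)"
    using s by (simp add: field_simps)
  then show ?thesis using d by (simp add: power2_eq_square)
qed

theorem mainTheorem1:
  fixes n :: nat
  assumes "n \<ge> 1"
  shows "((\<lambda>t::real. t^2 / (t^2 + 1/4)^2 *
            ((2 - 1 / sqrt (t^2 + 1/4)) ^ (n - 1) + (2 + 1 / sqrt (t^2 + 1/4)) ^ (n - 1)))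
          has_integral (pi * catalan n)) {0..}"
proof -
  define m where "m = n - 1"
  have nm: "n = Suc m" using assms unfolding m_def by simp
  define u where "u = (\<lambda>t::real. 1 / sqrt (t^2 + 1/4))"
  define f where "f = (\<lambda>t::real. t^2 / (t^2 + 1/4)^2 *
            ((2 - 1 / sqrt (t^2 + 1/4)) ^ m + (2 + 1 / sqrt (t^2 + 1/4)) ^ m))"
  define F where "F = (\<lambda>t. (GG m (2 - u t) - GG m (2 + u t)) / 2)"
  have Fd: "(F has_real_derivative f t) (at t)" if t: "0 < t" for t
  proof -
    define S where "S = sqrt (t^2 + 1/4)"
    have Sp: "S > 0" using sq_ge[of t] unfolding S_def by linarith
    have S2: "S^2 = t^2 + 1/4" unfolding S_def by (simp add: add_nonneg_nonneg)
    have ub: "0 < u t" "u t < 2" unfolding u_def using u_bounds(1)[of t] u_lt[OF t] by simp_all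
    have du: "(u has_real_derivative - (t / S ^ 3)) (at t)" unfolding u_def S_def by (rule u_deriv)
    have d1: "((\<lambda>t. 2 - u t) has_real_derivative - (- (t / S ^ 3))) (at t)"
      using DERIV_diff[OF DERIV_const[of 2] du] by simp
    have d2: "((\<lambda>t. 2 + u t) has_real_derivative - (t / S ^ 3)) (at t)"
      using DERIV_add[OF DERIV_const[of 2] du] by simp
    have gd1: "(GG m has_real_derivative (2 - u t)^m * vv (2 - u t)) (at (2 - u t))"
      by (rule GG_deriv) (use ub in linarith)+
    have gd2: "(GG m has_real_derivative (2 + u t)^m * vv (2 + u t)) (at (2 + u t))"
      by (rule GG_deriv) (use ub in linarith)+
    note g1 = DERIV_chain2[OF gd1 d1]
    note g2 = DERIV_chain2[OF gd2 d2]
    have v: "vv (2 - u t) = 2*t/S" "vv (2 + u t) = 2*t/S"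
      unfolding u_def S_def using vv_u[of t] t by simp_all
    have uS: "u t = 1/S" unfolding u_def S_def ..
    have FF: "F = (\<lambda>t. (GG m (2 - u t) - GG m (2 + u t)) / 2)" by (rule F_def)
    have "(F has_real_derivative ((2 - u t)^m * vv (2 - u t) * - (- (t / S ^ 3))
           - (2 + u t)^m * vv (2 + u t) * - (t / S ^ 3)) / 2) (at t)"
      unfolding FF by (rule DERIV_cdivide[OF DERIV_diff[OF g1 g2]])
    moreover have "((2 - u t)^m * vv (2 - u t) * - (- (t / S ^ 3))
           - (2 + u t)^m * vv (2 + u t) * - (t / S ^ 3)) / 2 = f t"
    proof -
      have "(t^2 + 1/4)^2 = S*S*S*S" unfolding S2[symmetric] by (simp add: power2_eq_square)
      then show ?thesis unfolding f_def v S_def[symmetric] uS[symmetric]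
        by (rule alg[OF Sp])
    qed
    ultimately show ?thesis by (rule DERIV_cong)
  qed
  have fc: "isCont f t" for t
  proof -
    have "sqrt (t^2 + 1/4) > 0" using sq_ge[of t] by linarith
    moreover have p: "t^2 + 1/4 > (0::real)" by (simp add: add_nonneg_pos)
    moreover have "(t^2 + 1/4)^2 > (0::real)" using p by simp
    ultimately have ne: "sqrt (t^2 + 1/4) \<noteq> 0" "(t^2 + 1/4)^2 \<noteq> (0::real)" by auto
    show ?thesis unfolding f_def by (intro continuous_intros ne)
  qed
  have fnn: "0 \<le> f t" if "0 < t" for t
  proof -
    have a: "0 \<le> 2 - 1 / sqrt (t^2 + 1/4)" using u_bounds[of t] by linarith
    have b: "0 \<le> 2 + 1 / sqrt (t^2 + 1/4)" using u_bounds[of t] by linarith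
    have "0 \<le> (2 - 1 / sqrt (t^2 + 1/4))^m + (2 + 1 / sqrt (t^2 + 1/4))^m"
      by (rule add_nonneg_nonneg; rule zero_le_power; rule a b)
    moreover have "0 \<le> t^2 / (t^2 + 1/4)^2" by simp
    ultimately show ?thesis unfolding f_def by (rule mult_nonneg_nonneg[rotated])
  qed
  have Fcont: "continuous_on UNIV F"
  proof -
    have uc: "continuous_on UNIV u"
    proof -
      have "sqrt (t^2 + 1/4) \<noteq> (0::real)" for t using sq_ge[of t] by linarith
      then show ?thesis unfolding u_def by (intro continuous_intros) auto
    qed
    have r1: "(\<lambda>t. 2 - u t) ` UNIV \<subseteq> {0..4}" "(\<lambda>t. 2 + u t) ` UNIV \<subseteq> {0..4}"
    proof -
      have "0 \<le> 2 - u t \<and> 2 - u t \<le> 4 \<and> 0 \<le> 2 + u t \<and> 2 + u t \<le> 4" for t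
        using u_bounds[of t] unfolding u_def by linarith
      then show "(\<lambda>t. 2 - u t) ` UNIV \<subseteq> {0..4}" "(\<lambda>t. 2 + u t) ` UNIV \<subseteq> {0..4}" by auto
    qed
    have c1: "continuous_on UNIV (\<lambda>t. 2 - u t)" by (rule continuous_on_diff[OF continuous_on_const uc])
    have c2: "continuous_on UNIV (\<lambda>t. 2 + u t)" by (rule continuous_on_add[OF continuous_on_const uc])
    have g1: "continuous_on UNIV (\<lambda>t. GG m (2 - u t))"
      by (rule continuous_on_compose2[OF GG_cont c1 r1(1)])
    have g2: "continuous_on UNIV (\<lambda>t. GG m (2 + u t))"
      by (rule continuous_on_compose2[OF GG_cont c2 r1(2)])
    have FF: "F = (\<lambda>t. (GG m (2 - u t) - GG m (2 + u t)) / 2)" by (rule F_def)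
    show ?thesis unfolding FF
      by (rule continuous_on_divide[OF continuous_on_diff[OF g1 g2] continuous_on_const]) simp
  qed
  have u0: "u 0 = 2" unfolding u_def by (simp add: real_sqrt_divide)
  have F0: "F 0 = (GG m 0 - GG m 4) / 2" unfolding F_def u0 by simp
  have A: "(F \<longlongrightarrow> F 0) (at_right 0)"
  proof -
    have "isCont F 0" using Fcont by (simp add: continuous_on_eq_continuous_at)
    then show ?thesis by (simp add: continuous_at_imp_continuous_at_within continuous_within isCont_def filterlim_at_split)
  qed
  have B: "(F \<longlongrightarrow> 0) at_top"
  proof -
    have c2: "isCont (GG m) 2" using GG_deriv[of 2 m] by (simp add: DERIV_isCont)
    have "((\<lambda>t. 2 - u t) \<longlongrightarrow> 2 - 0) at_top" "((\<lambda>t. 2 + u t) \<longlongrightarrow> 2 + 0) at_top"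
      using u_tendsto unfolding u_def by (intro tendsto_intros; simp)+
    then have "((\<lambda>t. GG m (2 - u t)) \<longlongrightarrow> GG m 2) at_top" "((\<lambda>t. GG m (2 + u t)) \<longlongrightarrow> GG m 2) at_top"
      by (auto intro: isCont_tendsto_compose[OF c2])
    then have "(F \<longlongrightarrow> (GG m 2 - GG m 2) / 2) at_top" unfolding F_def by (intro tendsto_intros) auto
    then show ?thesis by simp
  qed
  note I = interval_integral_FTC_nonneg[where F=F and f=f and a=0 and b=\<infinity> and A="F 0" and B=0]
  have h1: "(0::ereal) < \<infinity>" by simp
  have h2: "DERIV F x :> f x" if "0 < ereal x" "ereal x < \<infinity>" for x
    using that by (intro Fd) (simp add: zero_ereal_def)
  have h3: "isCont f x" if "0 < ereal x" "ereal x < \<infinity>" for x by (rule fc)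
  have h4: "AE x in lborel. 0 < ereal x \<longrightarrow> ereal x < \<infinity> \<longrightarrow> 0 \<le> f x"
    by (intro AE_I2 impI fnn) (simp add: zero_ereal_def)
  have h5: "((F \<circ> real_of_ereal) \<longlongrightarrow> F 0) (at_right 0)"
    unfolding zero_ereal_def ereal_tendsto_simps by (rule A)
  have h6: "((F \<circ> real_of_ereal) \<longlongrightarrow> 0) (at_left \<infinity>)"
    unfolding ereal_tendsto_simps by (rule B)
  note int = I[OF h1 h2 h3 h4 h5 h6]
  have e: "einterval 0 \<infinity> = {0<..}" by (simp add: zero_ereal_def)
  have "(LINT x:{0<..}|lborel. f x) = 0 - F 0"
    using int(2) unfolding interval_lebesgue_integral_def e by simp
  then have "(f has_integral (0 - F 0)) {0<..}"
    using set_borel_integral_eq_integral[OF int(1)[unfolded e]] by (simp add: has_integral_integral)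
  moreover have "0 - F 0 = pi * catalan n" unfolding F0 nm using GG_diff[of m] by (simp add: field_simps)
  ultimately have "(f has_integral (pi * catalan n)) {0<..}" by simp
  then have "(f has_integral (pi * catalan n)) {0..}"
  proof -
    have n1: "negligible {x \<in> {0<..} - {0..}. f x \<noteq> (0::real)}"
    proof -
      have "{x \<in> {0<..} - {0..}. f x \<noteq> (0::real)} = {}" by auto
      then show ?thesis by (simp only: negligible_empty)
    qed
    have n2: "negligible {x \<in> {0..} - {0<..}. f x \<noteq> (0::real)}"
      by (rule negligible_subset[of "{0}"]) auto
    show ?thesis using has_integral_spike_set_eq[OF n1 n2]
      \<open>(f has_integral (pi * catalan n)) {0<..}\<close> by blast
  qed
  from this[unfolded f_def m_def] show ?thesis .
qed

end
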